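(* Let $G=(V,E)$ be a connected bipartite simple graph with $|V|=n$, with bipartite orientations $O_{\text{down}}$ and $O_{\text{up}}$, and let $O$ be any acyclic orientation of $E$. Then there exists an injective function from the set of linear extensions of $O$ to the set of linear extensions of $O_{\text{up}}$, and such an injection is surjective if and only if $O=O_{\text{up}}$ or $O=O_{\text{down}}$. Equivalently, $e(P_O)\le e(P_{O_{\text{up}}})$ with equality if and only if $O$ is one of the two bipartite orientations, where $P_O$ denotes the poset induced by $O$ and $e(\cdot)$ the number of linear extensions. Consequently, the acyclic orientations of $G$ maximizing the number of linear extensions are exactly the bipartite orientations.
   Context: If $G=(V,E)$ has bipartition $V=V_1\sqcup V_2$, its two bipartite orientations are the orientation choosing $(v_1,v_2)$ (meaning $v_1$ directed to $v_2$) for every edge $\{v_1,v_2\}$ with $v_1\in V_1$, $v_2\in V_2$, and the orientation choosing $(v_2,v_1)$ for every such edge. An acyclic orientation of $E$ induces a partial order on $V$ in which $u<v$ if and only if there is a directed path from $u$ to $v$. A linear extension of a partial order $P$ on an $n$-element set $V$ is a bijection $\sigma:V\to[n]$ such that $u<_P v$ implies $\sigma(u)<\sigma(v)$; $e(P)$ denotes the number of linear extensions of $P$, and a linear extension of an acyclic orientation means a linear extension of its induced poset. *)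

theory Defs
  imports Main
begin

definition simple_graph :: "'a set \<Rightarrow> 'a set set \<Rightarrow> bool" where
  "simple_graph V E \<longleftrightarrow> finite V \<and> (\<forall>e\<in>E. e \<subseteq> V \<and> card e = 2)"

definition adj :: "'a set set \<Rightarrow> ('a \<times> 'a) set" where
  "adj E = {(u, v). {u, v} \<in> E}"

definition connected_graph :: "'a set \<Rightarrow> 'a set set \<Rightarrow> bool" where
  "connected_graph V E \<longleftrightarrow> (\<forall>u\<in>V. \<forall>v\<in>V. (u, v) \<in> (adj E)\<^sup>*)"

definition bipartition :: "'a set \<Rightarrow> 'a set set \<Rightarrow> 'a set \<Rightarrow> 'a set \<Rightarrow> bool" where
  "bipartition V E V1 V2 \<longleftrightarrow> V1 \<inter> V2 = {} \<and> V1 \<union> V2 = V \<and>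
     (\<forall>e\<in>E. \<exists>u\<in>V1. \<exists>v\<in>V2. e = {u, v})"

definition orientation :: "'a set set \<Rightarrow> ('a \<times> 'a) set \<Rightarrow> bool" where
  "orientation E Or \<longleftrightarrow> (\<forall>(u, v)\<in>Or. {u, v} \<in> E) \<and>
     (\<forall>e\<in>E. \<exists>!p. p \<in> Or \<and> {fst p, snd p} = e)"

definition O_down :: "'a set set \<Rightarrow> 'a set \<Rightarrow> 'a set \<Rightarrow> ('a \<times> 'a) set" where
  "O_down E V1 V2 = {(u, v). {u, v} \<in> E \<and> u \<in> V1 \<and> v \<in> V2}"

definition O_up :: "'a set set \<Rightarrow> 'a set \<Rightarrow> 'a set \<Rightarrow> ('a \<times> 'a) set" where
  "O_up E V1 V2 = {(v, u). {u, v} \<in> E \<and> u \<in> V1 \<and> v \<in> V2}"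

definition induced_order :: "('a \<times> 'a) set \<Rightarrow> ('a \<times> 'a) set" where
  "induced_order Or = Or\<^sup>+"

(* linear extensions of a (strict) order relation P on V, as bijections V \<rightarrow> [n];
   functions are taken extensional (undefined off V) so that the set is finite. *)
definition linear_extensions :: "'a set \<Rightarrow> ('a \<times> 'a) set \<Rightarrow> ('a \<Rightarrow> nat) set" where
  "linear_extensions V P = {\<sigma>. bij_betw \<sigma> V {1..card V} \<and>
       (\<forall>u\<in>V. \<forall>v\<in>V. (u, v) \<in> P \<longrightarrow> \<sigma> u < \<sigma> v) \<and>
       (\<forall>x. x \<notin> V \<longrightarrow> \<sigma> x = undefined)}"

definition lin_ext_orient :: "'a set \<Rightarrow> ('a \<times> 'a) set \<Rightarrow> ('a \<Rightarrow> nat) set" where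
  "lin_ext_orient V Or = linear_extensions V (induced_order Or)"

definition num_lin_ext :: "'a set \<Rightarrow> ('a \<times> 'a) set \<Rightarrow> nat" where
  "num_lin_ext V Or = card (lin_ext_orient V Or)"

end

theory Submission
  imports Defs "HOL-Library.FuncSet"
begin


definition resp :: "('a\<times>'a) set \<Rightarrow> 'a list \<Rightarrow> bool" where
 "resp R xs \<longleftrightarrow> (\<forall>i<length xs. \<forall>j<length xs. (xs!i, xs!j) \<in> R \<longrightarrow> i < j)"

definition LL :: "'a set \<Rightarrow> ('a\<times>'a) set \<Rightarrow> 'a list set" where
 "LL W R = {xs. distinct xs \<and> set xs = W \<and> resp R xs}"

definition mn :: "('a\<times>'a) set \<Rightarrow> 'a set \<Rightarrow> 'a set" where
 "mn R W = {z\<in>W. \<forall>x\<in>W. (x,z)\<notin>R}"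

lemma resp_Cons: "resp R (z#ys) \<longleftrightarrow> resp R ys \<and> (\<forall>x\<in>set (z#ys). (x,z) \<notin> R)"
proof
  assume H: "resp R (z#ys)"
  have "resp R ys" unfolding resp_def
  proof (intro allI impI)
    fix i j assume "i < length ys" "j < length ys" "(ys!i, ys!j) \<in> R"
    then have "((z#ys)!Suc i, (z#ys)!Suc j) \<in> R" by simp
    with H \<open>i < length ys\<close> \<open>j < length ys\<close> show "i < j" unfolding resp_def by fastforce
  qed
  moreover have "\<forall>x\<in>set (z#ys). (x,z) \<notin> R"
  proof
    fix x assume "x \<in> set (z#ys)"
    then obtain k where k: "k < length (z#ys)" "(z#ys)!k = x" by (metis in_set_conv_nth)
    show "(x,z) \<notin> R"
    proof
      assume "(x,z) \<in> R"
      then have "((z#ys)!k, (z#ys)!0) \<in> R" using k by simp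
      with H k show False unfolding resp_def by fastforce
    qed
  qed
  ultimately show "resp R ys \<and> (\<forall>x\<in>set (z#ys). (x,z) \<notin> R)" by blast
next
  assume H: "resp R ys \<and> (\<forall>x\<in>set (z#ys). (x,z) \<notin> R)"
  show "resp R (z#ys)" unfolding resp_def
  proof (intro allI impI)
    fix i j assume i: "i < length (z#ys)" and j: "j < length (z#ys)" and r: "((z#ys)!i, (z#ys)!j) \<in> R"
    show "i < j"
    proof (cases j)
      case 0
      then have "(z#ys)!i \<in> set (z#ys)" using i by (metis nth_mem)
      with H r 0 show ?thesis by (metis nth_Cons_0)
    next
      case (Suc j')
      show ?thesis
      proof (cases i)
        case 0 then show ?thesis using Suc by simp
      next
        case (Suc i')
        with \<open>j = Suc j'\<close> i j r H show ?thesis unfolding resp_def by auto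
      qed
    qed
  qed
qed

lemma LL_empty: "LL {} R = {[]}"
  unfolding LL_def resp_def by auto

lemma LL_finite: assumes "finite W" shows "finite (LL W R)"
proof -
  have "LL W R \<subseteq> {xs. set xs \<subseteq> W \<and> length xs \<le> card W}"
    unfolding LL_def by (auto simp: distinct_card[symmetric])
  moreover have "finite {xs. set xs \<subseteq> W \<and> length xs \<le> card W}"
    by (rule finite_lists_length_le[OF assms])
  ultimately show ?thesis by (rule finite_subset)
qed

lemma LL_eq_UN: assumes "W \<noteq> {}"
  shows "LL W R = (\<Union>z\<in>mn R W. (\<lambda>ys. z#ys) ` LL (W-{z}) R)"
proof
  show "LL W R \<subseteq> (\<Union>z\<in>mn R W. (\<lambda>ys. z#ys) ` LL (W-{z}) R)"
  proof
    fix xs assume xs: "xs \<in> LL W R"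
    then have "xs \<noteq> []" using assms unfolding LL_def by auto
    then obtain z ys where xz: "xs = z#ys" by (cases xs) auto
    have d: "distinct (z#ys)" "set (z#ys) = W" "resp R (z#ys)" using xs xz unfolding LL_def by auto
    then have "z \<in> mn R W" unfolding mn_def using resp_Cons by fastforce
    moreover have "ys \<in> LL (W-{z}) R" using d resp_Cons[of R z ys] unfolding LL_def by auto
    ultimately show "xs \<in> (\<Union>z\<in>mn R W. (\<lambda>ys. z#ys) ` LL (W-{z}) R)" using xz by blast
  qed
next
  show "(\<Union>z\<in>mn R W. (\<lambda>ys. z#ys) ` LL (W-{z}) R) \<subseteq> LL W R"
  proof clarify
    fix z ys assume z: "z \<in> mn R W" and ys: "ys \<in> LL (W-{z}) R"
    have zW: "z \<in> W" and zm: "\<forall>x\<in>W. (x,z)\<notin>R" using z unfolding mn_def by auto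
    have "set (z#ys) = W" using ys zW unfolding LL_def by auto
    then show "z#ys \<in> LL W R" using ys zm resp_Cons[of R z ys] unfolding LL_def by auto
  qed
qed

lemma LL_rec: assumes "finite W" "W \<noteq> {}"
  shows "card (LL W R) = (\<Sum>z\<in>mn R W. card (LL (W-{z}) R))"
proof -
  have fm: "finite (mn R W)" using assms(1) unfolding mn_def by auto
  have "card (LL W R) = card (\<Union>z\<in>mn R W. (\<lambda>ys. z#ys) ` LL (W-{z}) R)"
    using LL_eq_UN[OF assms(2)] by simp
  also have "\<dots> = (\<Sum>z\<in>mn R W. card ((\<lambda>ys. z#ys) ` LL (W-{z}) R))"
    by (rule card_UN_disjoint[OF fm]) (auto intro: LL_finite assms(1))
  also have "\<dots> = (\<Sum>z\<in>mn R W. card (LL (W-{z}) R))"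
    by (intro sum.cong refl card_image) (auto simp: inj_on_def)
  finally show ?thesis .
qed



definition pos :: "'a list \<Rightarrow> 'a \<Rightarrow> nat" where
  "pos xs = inv_into {..<length xs} ((!) xs)"

lemma pos_facts:
  assumes "distinct xs"
  shows "x \<in> set xs \<Longrightarrow> pos xs x < length xs"
    and "x \<in> set xs \<Longrightarrow> xs ! (pos xs x) = x"
    and "i < length xs \<Longrightarrow> pos xs (xs ! i) = i"
proof -
  have b: "bij_betw ((!) xs) {..<length xs} (set xs)" by (rule bij_betw_nth[OF assms]) auto
  show "x \<in> set xs \<Longrightarrow> pos xs x < length xs"
    using bij_betw_inv_into[OF b] unfolding pos_def bij_betw_def by auto
  show "x \<in> set xs \<Longrightarrow> xs ! (pos xs x) = x"
    unfolding pos_def by (rule bij_betw_inv_into_right[OF b])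
  show "i < length xs \<Longrightarrow> pos xs (xs ! i) = i"
    unfolding pos_def by (rule bij_betw_inv_into_left[OF b]) auto
qed

definition toS :: "'a set \<Rightarrow> 'a list \<Rightarrow> 'a \<Rightarrow> nat" where
  "toS V xs = (\<lambda>x. if x \<in> V then Suc (pos xs x) else undefined)"

definition fromS :: "'a set \<Rightarrow> ('a \<Rightarrow> nat) \<Rightarrow> 'a list" where
  "fromS V \<sigma> = map (inv_into V \<sigma>) [1..<Suc (card V)]"

lemma pos_trancl:
  assumes xs: "xs \<in> LL V R" and RV: "R \<subseteq> V \<times> V" and uv: "(u,v) \<in> R\<^sup>+"
  shows "pos xs u < pos xs v"
  using uv
proof (induction rule: trancl_induct)
  case (base y)
  have d: "distinct xs" and s: "set xs = V" and r: "resp R xs" using xs unfolding LL_def by auto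
  have "u \<in> V" "y \<in> V" using base RV by auto
  then have "(xs ! pos xs u, xs ! pos xs y) \<in> R" using base pos_facts(2)[OF d] s by simp
  moreover have "pos xs u < length xs" "pos xs y < length xs" using pos_facts(1)[OF d] s \<open>u\<in>V\<close> \<open>y\<in>V\<close> by auto
  ultimately show ?case using r unfolding resp_def by blast
next
  case (step y z)
  have d: "distinct xs" and s: "set xs = V" and r: "resp R xs" using xs unfolding LL_def by auto
  have "y \<in> V" "z \<in> V" using step RV by auto
  then have "(xs ! pos xs y, xs ! pos xs z) \<in> R" using step pos_facts(2)[OF d] s by simp
  moreover have "pos xs y < length xs" "pos xs z < length xs" using pos_facts(1)[OF d] s \<open>y\<in>V\<close> \<open>z\<in>V\<close> by auto
  ultimately have "pos xs y < pos xs z" using r unfolding resp_def by blast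
  with step show ?case by simp
qed

lemma toS_in:
  assumes xs: "xs \<in> LL V R" and RV: "R \<subseteq> V \<times> V"
  shows "toS V xs \<in> linear_extensions V (R\<^sup>+)"
proof -
  have d: "distinct xs" and s: "set xs = V" using xs unfolding LL_def by auto
  have len: "length xs = card V" using distinct_card[OF d] s by simp
  have b1: "bij_betw (pos xs) V {..<card V}"
    using bij_betw_inv_into[OF bij_betw_nth[OF d refl refl]] s len unfolding pos_def by simp
  have b2: "bij_betw Suc {..<card V} {1..card V}"
    by (simp add: bij_betw_def image_Suc_lessThan)
  have "bij_betw (Suc \<circ> pos xs) V {1..card V}" by (rule bij_betw_trans[OF b1 b2])
  then have b: "bij_betw (toS V xs) V {1..card V}"
    by (rule bij_betw_cong[THEN iffD1, rotated]) (simp add: toS_def)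
  have "\<forall>u\<in>V. \<forall>v\<in>V. (u, v) \<in> R\<^sup>+ \<longrightarrow> toS V xs u < toS V xs v"
    using pos_trancl[OF xs RV] by (simp add: toS_def)
  then show ?thesis using b unfolding linear_extensions_def by (simp add: toS_def)
qed

lemma fromS_in:
  assumes s: "\<sigma> \<in> linear_extensions V (R\<^sup>+)"
  shows "fromS V \<sigma> \<in> LL V R" and "toS V (fromS V \<sigma>) = \<sigma>"
proof -
  let ?n = "card V"
  have b: "bij_betw \<sigma> V {1..?n}" and m: "\<forall>u\<in>V. \<forall>v\<in>V. (u, v) \<in> R\<^sup>+ \<longrightarrow> \<sigma> u < \<sigma> v"
    and ext: "\<forall>x. x \<notin> V \<longrightarrow> \<sigma> x = undefined"
    using s unfolding linear_extensions_def by auto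
  have bi: "bij_betw (inv_into V \<sigma>) {1..?n} V" by (rule bij_betw_inv_into[OF b])
  have st: "set [1..<Suc ?n] = {1..?n}" by auto
  let ?xs = "fromS V \<sigma>"
  have len: "length ?xs = ?n" unfolding fromS_def by simp
  have nth: "i < ?n \<Longrightarrow> ?xs ! i = inv_into V \<sigma> (Suc i)" for i
    unfolding fromS_def by (simp del: upt_Suc add: nth_map_upt)
  have d: "distinct ?xs" unfolding fromS_def
    using bi st by (simp add: distinct_map bij_betw_def)
  have se: "set ?xs = V" unfolding fromS_def using bi st by (simp add: bij_betw_def)
  have sig: "i < ?n \<Longrightarrow> \<sigma> (?xs ! i) = Suc i" for i
    using nth bij_betw_inv_into_right[OF b, of "Suc i"] by simp
  have inV: "i < ?n \<Longrightarrow> ?xs ! i \<in> V" for i using se len by (metis nth_mem)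
  have r: "resp R ?xs" unfolding resp_def
  proof (intro allI impI)
    fix i j assume i: "i < length ?xs" and j: "j < length ?xs" and rr: "(?xs!i, ?xs!j) \<in> R"
    then have "\<sigma> (?xs!i) < \<sigma> (?xs!j)" using m inV len by auto
    then show "i < j" using sig i j len by simp
  qed
  show "?xs \<in> LL V R" using d se r unfolding LL_def by simp
  show "toS V ?xs = \<sigma>"
  proof
    fix x show "toS V ?xs x = \<sigma> x"
    proof (cases "x \<in> V")
      case True
      have sx: "\<sigma> x \<in> {1..?n}" using b True by (auto simp: bij_betw_def)
      have "?xs ! (\<sigma> x - 1) = x" using nth[of "\<sigma> x - 1"] sx bij_betw_inv_into_left[OF b True] by auto
      then have "pos ?xs x = \<sigma> x - 1" using pos_facts(3)[OF d, of "\<sigma> x - 1"] sx len by auto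
      then show ?thesis using True sx by (simp add: toS_def)
    next
      case False then show ?thesis using ext by (simp add: toS_def)
    qed
  qed
qed

lemma finite_LE: assumes "finite V" shows "finite (linear_extensions V P)"
proof -
  have "linear_extensions V P \<subseteq> PiE V (\<lambda>_. {1..card V})"
    unfolding linear_extensions_def PiE_def extensional_def Pi_def bij_betw_def by auto
  moreover have "finite (PiE V (\<lambda>_. {1..card V}))" by (rule finite_PiE[OF assms]) auto
  ultimately show ?thesis by (rule finite_subset)
qed

lemma bridge:
  assumes fin: "finite V" and RV: "R \<subseteq> V \<times> V"
  shows "card (linear_extensions V (R\<^sup>+)) = card (LL V R)"
proof (rule antisym)
  have "inj_on (fromS V) (linear_extensions V (R\<^sup>+))"
    by (rule inj_on_inverseI[where g="toS V"]) (rule fromS_in(2))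
  then show "card (linear_extensions V (R\<^sup>+)) \<le> card (LL V R)"
    by (rule card_inj_on_le) (auto intro: fromS_in(1) LL_finite fin)
next
  have "inj_on (toS V) (LL V R)"
  proof (rule inj_onI)
    fix xs ys assume xs: "xs \<in> LL V R" and ys: "ys \<in> LL V R" and e: "toS V xs = toS V ys"
    have dx: "distinct xs" "set xs = V" and dy: "distinct ys" "set ys = V" using xs ys unfolding LL_def by auto
    have pe: "x \<in> V \<Longrightarrow> pos xs x = pos ys x" for x using fun_cong[OF e, of x] by (simp add: toS_def)
    have l: "length xs = length ys" using distinct_card[OF dx(1)] distinct_card[OF dy(1)] dx dy by simp
    show "xs = ys"
    proof (rule nth_equalityI[OF l])
      fix i assume i: "i < length xs"
      have xi: "xs ! i \<in> V" using i dx by (metis nth_mem)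
      have "pos ys (xs!i) = i" using pe[OF xi] pos_facts(3)[OF dx(1) i] by simp
      then show "xs ! i = ys ! i" using pos_facts(2)[OF dy(1), of "xs!i"] xi dy by simp
    qed
  qed
  then show "card (LL V R) \<le> card (linear_extensions V (R\<^sup>+))"
    by (rule card_inj_on_le) (auto intro: toS_in[OF _ RV] finite_LE fin)
qed



locale bip =
  fixes E :: "'a set set" and A B :: "'a set"
  assumes disj: "A \<inter> B = {}" and edg: "\<forall>e\<in>E. \<exists>a\<in>A. \<exists>b\<in>B. e = {a,b}"
begin

abbreviation "Up \<equiv> O_up E A B"
definition F where "F W = card (LL W Up)"
definition nb where "nb W v = {x\<in>W. {v,x}\<in>E}"
definition indep where "indep S \<longleftrightarrow> (\<forall>x\<in>S. \<forall>y\<in>S. {x,y}\<notin>E)"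
definition tight where "tight W S \<longleftrightarrow> (\<forall>x y. {x,y}\<in>E \<longrightarrow> x\<in>W \<longrightarrow> y\<in>W \<longrightarrow> x\<in>S \<or> y\<in>S) \<and> (\<forall>v\<in>W. nb W v = {} \<longrightarrow> v\<in>S)"
definition Lv where "Lv W k = {a\<in>W. nb W a = {k}}"
definition Sk where "Sk W S k = (S - {k}) \<union> (if k\<in>S then Lv W k else {})"

lemma edge_cases: "{x,y}\<in>E \<Longrightarrow> (x\<in>A \<and> y\<in>B \<and> x \<notin> B \<and> y \<notin> A) \<or> (x\<in>B \<and> y\<in>A \<and> x \<notin> A \<and> y \<notin> B)"
proof -
  assume "{x,y}\<in>E"
  then obtain a b where ab: "a\<in>A" "b\<in>B" "{x,y} = {a,b}" using edg by blast
  then have "a \<noteq> b" using disj by auto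
  then have "(x = a \<and> y = b) \<or> (x = b \<and> y = a)" using ab(3) by (auto simp: doubleton_eq_iff)
  then show ?thesis using ab disj by auto
qed

lemma edge_neq: "{x,y}\<in>E \<Longrightarrow> x \<noteq> y"
  using edge_cases disj by blast

lemma Up_iff: "(x,y)\<in>Up \<longleftrightarrow> {x,y}\<in>E \<and> x\<in>B \<and> y\<in>A"
  unfolding O_up_def by (auto simp: insert_commute)

lemma not_loop: "{k,k} \<notin> E" using edge_neq by blast

lemma mn_Up: assumes "W \<subseteq> A \<union> B" shows "mn Up W = {z\<in>W. z\<in>B \<or> nb W z = {}}"
proof (intro set_eqI iffI)
  fix z assume z: "z \<in> mn Up W"
  then have zW: "z \<in> W" and m: "\<forall>x\<in>W. (x,z) \<notin> Up" unfolding mn_def by auto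
  show "z \<in> {z\<in>W. z\<in>B \<or> nb W z = {}}"
  proof (cases "z \<in> B")
    case False
    have "nb W z = {}"
    proof (rule ccontr)
      assume "nb W z \<noteq> {}"
      then obtain x where x: "x\<in>W" "{z,x}\<in>E" unfolding nb_def by auto
      then have "x \<in> B" "z \<in> A" using edge_cases[OF x(2)] False by auto
      then have "(x,z)\<in>Up" using x by (simp add: Up_iff insert_commute)
      then show False using m x by auto
    qed
    then show ?thesis using zW by auto
  qed (use zW in auto)
next
  fix z assume "z \<in> {z\<in>W. z\<in>B \<or> nb W z = {}}"
  then have zW: "z\<in>W" and c: "z\<in>B \<or> nb W z = {}" by auto
  have "\<forall>x\<in>W. (x,z) \<notin> Up"
  proof (intro ballI notI)
    fix x assume "x \<in> W" "(x,z) \<in> Up"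
    then have "{x,z}\<in>E" "z \<in> A" by (auto simp: Up_iff)
    then show False using c disj \<open>x\<in>W\<close> unfolding nb_def by (auto simp: insert_commute)
  qed
  then show "z \<in> mn Up W" using zW unfolding mn_def by auto
qed

lemma F_empty: "F {} = 1" unfolding F_def by (simp add: LL_empty)

lemma F_pos: assumes "finite W" "W \<subseteq> A \<union> B" shows "F W \<ge> 1"
  using assms
proof (induction "card W" arbitrary: W rule: less_induct)
  case less
  show ?case
  proof (cases "W = {}")
    case True then show ?thesis by (simp add: F_empty)
  next
    case False
    have "mn Up W \<noteq> {}"
    proof (cases "W \<inter> B = {}")
      case True
      obtain w where w: "w \<in> W" using False by auto
      have "nb W w = {}" using True w less.prems edge_cases unfolding nb_def by blast
      then show ?thesis using mn_Up[OF less.prems(2)] w by auto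
    next
      case False
      then obtain w where "w \<in> W" "w \<in> B" by auto
      then show ?thesis using mn_Up[OF less.prems(2)] by auto
    qed
    then obtain k where k: "k \<in> mn Up W" by auto
    have kW: "k \<in> W" using k unfolding mn_def by auto
    have fm: "finite (mn Up W)" using less.prems(1) unfolding mn_def by auto
    have "1 \<le> F (W - {k})"
      using less.hyps[of "W - {k}"] less.prems kW by (meson Diff_subset card_Diff1_less finite_Diff subset_trans)
    also have "\<dots> \<le> (\<Sum>z\<in>mn Up W. F (W - {z}))"
      by (rule member_le_sum[OF k _ fm]) simp
    also have "\<dots> = F W" unfolding F_def using LL_rec[OF less.prems(1) False] by simp
    finally show ?thesis .
  qed
qed

lemma Sk_sub: assumes "S \<subseteq> W" shows "Sk W S k \<subseteq> W - {k}"
proof -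
  have "k \<notin> Lv W k" using not_loop[of k] unfolding Lv_def nb_def by (auto simp: set_eq_iff)
  then show ?thesis using assms unfolding Sk_def Lv_def by auto
qed

lemma Sk_indep: assumes "S \<subseteq> W" "indep S" shows "indep (Sk W S k)"
  unfolding indep_def
proof (intro ballI)
  fix x y assume x: "x \<in> Sk W S k" and y: "y \<in> Sk W S k"
  have sub: "Sk W S k \<subseteq> W - {k}" by (rule Sk_sub[OF assms(1)])
  show "{x,y} \<notin> E"
  proof
    assume e: "{x,y} \<in> E"
    show False
    proof (cases "x \<in> Lv W k")
      case True
      then have "nb W x = {k}" unfolding Lv_def by auto
      moreover have "y \<in> nb W x" using e y sub unfolding nb_def by auto
      ultimately show False using y sub by auto
    next
      case xn: False
      show False
      proof (cases "y \<in> Lv W k")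
        case True
        then have "nb W y = {k}" unfolding Lv_def by auto
        moreover have "x \<in> nb W y" using e x sub unfolding nb_def by (auto simp: insert_commute)
        ultimately show False using x sub by auto
      next
        case False
        then have "x \<in> S" "y \<in> S" using x y xn unfolding Sk_def by (auto split: if_splits)
        then show False using assms(2) e unfolding indep_def by auto
      qed
    qed
  qed
qed

lemma P1_case:
  assumes WAB: "W \<subseteq> A \<union> B" and y: "y \<in> mn Up (W - {z})" and ny: "y \<notin> mn Up W"
  shows "nb W y = {z} \<and> y \<in> A \<and> z \<in> B \<and> z \<in> W"
proof -
  have yW: "y \<in> W" "y \<noteq> z" and m: "\<forall>x\<in>W-{z}. (x,y)\<notin>Up" using y unfolding mn_def by auto
  obtain x where x: "x \<in> W" "(x,y) \<in> Up" using ny yW unfolding mn_def by auto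
  then have xz: "x = z" using m by auto
  have zB: "z \<in> B" and yA: "y \<in> A" and e: "{z,y}\<in>E" using x xz by (auto simp: Up_iff)
  have "nb W y \<subseteq> {z}"
  proof
    fix w assume w: "w \<in> nb W y"
    then have "w\<in>W" "{y,w}\<in>E" unfolding nb_def by auto
    then have "w \<in> B" using edge_cases yA disj by blast
    then have "(w,y)\<in>Up" using \<open>{y,w}\<in>E\<close> yA by (simp add: Up_iff insert_commute)
    then show "w \<in> {z}" using m \<open>w\<in>W\<close> by auto
  qed
  moreover have "z \<in> nb W y" using e x xz unfolding nb_def by (auto simp: insert_commute)
  ultimately show ?thesis using zB yA x xz by auto
qed

end


context bip begin

lemma key_exists:
  assumes fin: "finite W" and WAB: "W \<subseteq> A \<union> B" and SW: "S \<subseteq> W" and Sne: "S \<noteq> {}"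
    and nt: "\<not> tight W S"
  shows "\<exists>k\<in>mn Up W. \<not> tight (W - {k}) (Sk W S k)"
proof -
  have M: "mn Up W = {z\<in>W. z\<in>B \<or> nb W z = {}}" by (rule mn_Up[OF WAB])
  from nt consider (ii) x y where "{x,y}\<in>E" "x\<in>W" "y\<in>W" "x\<notin>S" "y\<notin>S"
    | (i) v where "v\<in>W" "nb W v = {}" "v\<notin>S"
    unfolding tight_def by blast
  then show ?thesis
  proof cases
    case (i v)
    obtain s where "s \<in> S" using Sne by auto
    then have "s \<in> W" "s \<noteq> v" using SW i by auto
    have "\<exists>k\<in>mn Up W. k \<noteq> v"
    proof (cases "s \<in> B \<or> nb W s = {}")
      case True then show ?thesis using M \<open>s\<in>W\<close> \<open>s\<noteq>v\<close> by auto
    next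
      case False
      then obtain b where b: "b \<in> W" "{s,b}\<in>E" unfolding nb_def by auto
      then have "b \<in> B" using False edge_cases by blast
      have "b \<noteq> v" using b i \<open>s\<in>W\<close> unfolding nb_def by (auto simp: insert_commute)
      then show ?thesis using M b \<open>b\<in>B\<close> by auto
    qed
    then obtain k where k: "k\<in>mn Up W" "k\<noteq>v" by auto
    have "v \<notin> Sk W S k" using i not_loop unfolding Sk_def Lv_def by auto
    moreover have "nb (W - {k}) v = {}" using i unfolding nb_def by auto
    ultimately show ?thesis using k i unfolding tight_def by auto
  next
    case (ii x y)
    obtain a b where ab: "{a,b}\<in>E" "a\<in>W" "b\<in>W" "a\<notin>S" "b\<notin>S" "a\<in>A" "b\<in>B"
      using ii edge_cases by (metis insert_commute)
    have aB: "a \<notin> B" using ab disj by auto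
    show ?thesis
    proof (cases "\<exists>b'\<in>W. b'\<noteq>b \<and> {a,b'}\<in>E")
      case True
      then obtain b' where b': "b'\<in>W" "b'\<noteq>b" "{a,b'}\<in>E" by auto
      have b'B: "b' \<in> B" using b' aB edge_cases by blast
      have kM: "b' \<in> mn Up W" using M b' b'B by auto
      have "a \<noteq> b'" using b'(3) edge_neq by blast
      have aL: "a \<notin> Lv W b'" using ab b' unfolding Lv_def nb_def by auto
      have bL: "b \<notin> Lv W b'"
      proof
        assume "b \<in> Lv W b'"
        then have "{b,b'}\<in>E" unfolding Lv_def nb_def by auto
        then show False using edge_cases ab(7) b'B by blast
      qed
      have "a \<notin> Sk W S b'" "b \<notin> Sk W S b'" using aL bL ab unfolding Sk_def by auto
      then have "\<not> tight (W - {b'}) (Sk W S b')"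
        using ab b' \<open>a\<noteq>b'\<close> unfolding tight_def by blast
      then show ?thesis using kM by auto
    next
      case False
      have kM: "b \<in> mn Up W" using M ab by auto
      have "nb (W - {b}) a = {}" using False unfolding nb_def by auto
      moreover have "a \<notin> Sk W S b" using ab unfolding Sk_def by auto
      moreover have "a \<in> W - {b}" using ab edge_neq by blast
      ultimately have "\<not> tight (W - {b}) (Sk W S b)" unfolding tight_def by blast
      then show ?thesis using kM by auto
    qed
  qed
qed

lemma lemmaK:
  assumes "finite W" "W \<subseteq> A \<union> B" "S \<subseteq> W" "indep S"
  shows "(\<Sum>z\<in>S. F (W - {z})) \<le> F W \<and> (\<not> tight W S \<longrightarrow> (\<Sum>z\<in>S. F (W - {z})) < F W)"
  using assms
proof (induction "card W" arbitrary: W S rule: less_induct)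
  case less
  note fin = less.prems(1) and WAB = less.prems(2) and SW = less.prems(3) and ind = less.prems(4)
  have finS: "finite S" using fin SW finite_subset by auto
  show ?case
  proof (cases "S = {}")
    case True
    then show ?thesis using F_pos[OF fin WAB] by simp
  next
    case Sne: False
    show ?thesis
    proof (cases "\<exists>z\<in>S. W = {z}")
      case True
      then obtain z where z: "z \<in> S" "W = {z}" by auto
      then have S: "S = {z}" using SW by auto
      have "mn Up {z} = {z}" unfolding mn_def using Up_iff not_loop by auto
      then have FW: "F W = 1" unfolding F_def using LL_rec[of W Up] z by (simp add: LL_empty)
      have "tight W S" using z S unfolding tight_def by auto
      then show ?thesis using S z FW F_empty by simp
    next
      case False
      then have Wz: "\<And>z. z\<in>S \<Longrightarrow> W - {z} \<noteq> {}" using SW by auto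
      have Wne: "W \<noteq> {}" using Sne SW by auto
      define M where "M = mn Up W"
      have finM: "finite M" using fin unfolding M_def mn_def by auto
      have MW: "M \<subseteq> W" unfolding M_def mn_def by auto
      define g where "g p = F (W - {fst p, snd p})" for p :: "'a \<times> 'a"
      define P1 where "P1 = (SIGMA z:S. mn Up (W - {z}))"
      define P2 where "P2 = (SIGMA k:M. Sk W S k)"
      define h where "h p = (if snd p \<in> M then (snd p, fst p) else p)" for p :: "'a \<times> 'a"
      have finP1: "finite P1" unfolding P1_def using finS fin by (auto simp: mn_def)
      have finP2: "finite P2" unfolding P2_def using finM fin
        by (intro finite_SigmaI) (auto intro: finite_subset[OF Sk_sub[OF SW]])
      have s1: "(\<Sum>z\<in>S. F (W - {z})) = (\<Sum>p\<in>P1. g p)"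
      proof -
        have "(\<Sum>z\<in>S. F (W - {z})) = (\<Sum>z\<in>S. \<Sum>y\<in>mn Up (W - {z}). g (z,y))"
        proof (rule sum.cong[OF refl])
          fix z assume z: "z \<in> S"
          have "F (W - {z}) = (\<Sum>y\<in>mn Up (W - {z}). F (W - {z} - {y}))"
            unfolding F_def using LL_rec[of "W - {z}" Up] fin Wz[OF z] by simp
          also have "\<dots> = (\<Sum>y\<in>mn Up (W - {z}). g (z,y))"
            unfolding g_def by (intro sum.cong refl) (simp add: Diff_insert2[symmetric] insert_commute)
          finally show "F (W - {z}) = (\<Sum>y\<in>mn Up (W - {z}). g (z,y))" .
        qed
        also have "\<dots> = (\<Sum>p\<in>P1. g p)" unfolding P1_def
          by (subst sum.Sigma) (auto simp: finS fin mn_def)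
        finally show ?thesis .
      qed
      have hP: "p \<in> P1 \<Longrightarrow> h p \<in> P2 \<and> (snd p \<notin> M \<longrightarrow> nb W (snd p) = {fst p})" for p
      proof -
        assume p: "p \<in> P1"
        obtain z y where zy: "p = (z,y)" by (cases p)
        have z: "z \<in> S" and y: "y \<in> mn Up (W - {z})" using p zy unfolding P1_def by auto
        have yz: "y \<noteq> z" using y unfolding mn_def by auto
        show ?thesis
        proof (cases "y \<in> M")
          case True
          then show ?thesis using z yz zy unfolding h_def P2_def Sk_def by auto
        next
          case False
          have c: "nb W y = {z} \<and> y \<in> A \<and> z \<in> B \<and> z \<in> W"
            using P1_case[OF WAB y] False unfolding M_def by auto
          then have "z \<in> M" unfolding M_def using mn_Up[OF WAB] by auto
          moreover have "y \<in> Lv W z" using c y unfolding Lv_def mn_def by auto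
          ultimately show ?thesis using z False c zy unfolding h_def P2_def Sk_def by auto
        qed
      qed
      have inj: "inj_on h P1"
      proof (rule inj_onI)
        fix p q assume p: "p \<in> P1" and q: "q \<in> P1" and e: "h p = h q"
        have cp: "snd p \<notin> M \<longrightarrow> nb W (snd p) = {fst p}" and cq: "snd q \<notin> M \<longrightarrow> nb W (snd q) = {fst q}"
          using hP p q by auto
        have pS: "fst p \<in> S" and qS: "fst q \<in> S" using p q unfolding P1_def by auto
        have adj: "\<And>u v. nb W u = {v} \<Longrightarrow> {u,v} \<in> E" unfolding nb_def by auto
        show "p = q"
        proof (cases "snd p \<in> M"; cases "snd q \<in> M")
          assume "snd p \<in> M" "snd q \<in> M" then show ?thesis using e unfolding h_def by (auto simp: prod_eq_iff)
        next
          assume a: "snd p \<in> M" "snd q \<notin> M"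
          then have "snd q = fst p" using e unfolding h_def by (auto simp: prod_eq_iff)
          then have "{fst p, fst q} \<in> E" using cq a adj by metis
          then show ?thesis using ind pS qS unfolding indep_def by auto
        next
          assume a: "snd p \<notin> M" "snd q \<in> M"
          then have "snd p = fst q" using e unfolding h_def by (auto simp: prod_eq_iff)
          then have "{fst q, fst p} \<in> E" using cp a adj by metis
          then show ?thesis using ind pS qS unfolding indep_def by auto
        next
          assume "snd p \<notin> M" "snd q \<notin> M" then show ?thesis using e unfolding h_def by auto
        qed
      qed
      have gh: "p \<in> P1 \<Longrightarrow> g (h p) = g p" for p unfolding g_def h_def by (auto simp: insert_commute)
      have s2: "(\<Sum>p\<in>P1. g p) = (\<Sum>p\<in>h ` P1. g p)"
        using sum.reindex[OF inj, of g] gh by simp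
      have s3: "(\<Sum>p\<in>h ` P1. g p) \<le> (\<Sum>p\<in>P2. g p)"
        by (rule sum_mono2[OF finP2]) (use hP in auto)
      have s4: "(\<Sum>p\<in>P2. g p) = (\<Sum>k\<in>M. \<Sum>z\<in>Sk W S k. F ((W - {k}) - {z}))"
      proof -
        have fs: "\<forall>k\<in>M. finite (Sk W S k)" using finite_subset[OF Sk_sub[OF SW]] fin by blast
        have "(\<Sum>p\<in>P2. g p) = (\<Sum>k\<in>M. \<Sum>z\<in>Sk W S k. g (k,z))" unfolding P2_def
          by (subst sum.Sigma[OF finM fs]) simp
        also have "\<dots> = (\<Sum>k\<in>M. \<Sum>z\<in>Sk W S k. F ((W - {k}) - {z}))"
          unfolding g_def by (intro sum.cong refl) (simp add: Diff_insert2[symmetric])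
        finally show ?thesis .
      qed
      have IH: "k \<in> M \<Longrightarrow> (\<Sum>z\<in>Sk W S k. F ((W - {k}) - {z})) \<le> F (W - {k}) \<and>
          (\<not> tight (W - {k}) (Sk W S k) \<longrightarrow> (\<Sum>z\<in>Sk W S k. F ((W - {k}) - {z})) < F (W - {k}))" for k
      proof -
        assume k: "k \<in> M"
        then have kW: "k \<in> W" using MW by auto
        show ?thesis
          by (rule less.hyps) (use fin kW WAB Sk_sub[OF SW] Sk_indep[OF SW ind] in
              \<open>auto simp: card_gt_0_iff intro: diff_less\<close>)
      qed
      have s6: "(\<Sum>k\<in>M. F (W - {k})) = F W"
        unfolding F_def M_def using LL_rec[OF fin Wne] by simp
      have s5: "(\<Sum>k\<in>M. \<Sum>z\<in>Sk W S k. F ((W - {k}) - {z})) \<le> (\<Sum>k\<in>M. F (W - {k}))"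
        by (rule sum_mono) (use IH in blast)
      have le: "(\<Sum>z\<in>S. F (W - {z})) \<le> (\<Sum>k\<in>M. \<Sum>z\<in>Sk W S k. F ((W - {k}) - {z}))"
        using s1 s2 s3 s4 by simp
      have strict: "\<not> tight W S \<Longrightarrow> (\<Sum>z\<in>S. F (W - {z})) < F W"
      proof -
        assume nt: "\<not> tight W S"
        obtain k where k: "k \<in> M" "\<not> tight (W - {k}) (Sk W S k)"
          using key_exists[OF fin WAB SW Sne nt] unfolding M_def by auto
        have "(\<Sum>k\<in>M. \<Sum>z\<in>Sk W S k. F ((W - {k}) - {z})) < (\<Sum>k\<in>M. F (W - {k}))"
          by (rule sum_strict_mono_ex1[OF finM]) (use IH k in blast)+
        then show ?thesis using le s6 by simp
      qed
      show ?thesis using le s5 s6 strict by simp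
    qed
  qed
qed

end


lemma resp_rev: "resp (R\<inverse>) xs \<Longrightarrow> resp R (rev xs)"
  unfolding resp_def
proof (intro allI impI)
  fix i j
  assume H: "\<forall>i<length xs. \<forall>j<length xs. (xs ! i, xs ! j) \<in> R\<inverse> \<longrightarrow> i < j"
    and i: "i < length (rev xs)" and j: "j < length (rev xs)" and r: "(rev xs ! i, rev xs ! j) \<in> R"
  let ?n = "length xs"
  have "(xs ! (?n - Suc j), xs ! (?n - Suc i)) \<in> R\<inverse>" using r i j by (simp add: rev_nth)
  then have "?n - Suc j < ?n - Suc i" using H i j by auto
  then show "i < j" using i j by simp
qed

lemma card_LL_conv: assumes "finite V" shows "card (LL V (R\<inverse>)) \<le> card (LL V R)"
proof (rule card_inj_on_le[where f=rev])
  show "inj_on rev (LL V (R\<inverse>))" by (simp add: inj_on_def)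
  show "rev ` LL V (R\<inverse>) \<subseteq> LL V R" unfolding LL_def using resp_rev by auto
  show "finite (LL V R)" by (rule LL_finite[OF assms])
qed

lemma card_LL_conv_eq: assumes "finite V" shows "card (LL V (R\<inverse>)) = card (LL V R)"
  using card_LL_conv[OF assms, of R] card_LL_conv[OF assms, of "R\<inverse>"] by simp

context bip begin

lemma mnO_indep: assumes cov: "\<forall>x y. {x,y}\<in>E \<longrightarrow> (x,y)\<in>Or \<or> (y,x)\<in>Or"
  shows "indep (mn Or W)"
  unfolding indep_def mn_def using cov by blast

lemma main_le:
  assumes "finite W" "W \<subseteq> A \<union> B" and cov: "\<forall>x y. {x,y}\<in>E \<longrightarrow> (x,y)\<in>Or \<or> (y,x)\<in>Or"
  shows "card (LL W Or) \<le> F W"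
  using assms(1,2)
proof (induction "card W" arbitrary: W rule: less_induct)
  case less
  show ?case
  proof (cases "W = {}")
    case True then show ?thesis by (simp add: LL_empty F_empty)
  next
    case False
    have "card (LL W Or) = (\<Sum>z\<in>mn Or W. card (LL (W-{z}) Or))" by (rule LL_rec[OF less.prems(1) False])
    also have "\<dots> \<le> (\<Sum>z\<in>mn Or W. F (W-{z}))"
    proof (rule sum_mono)
      fix z assume "z \<in> mn Or W"
      then have "z \<in> W" unfolding mn_def by auto
      then have c: "card (W-{z}) < card W" by (rule card_Diff1_less[OF less.prems(1)])
      show "card (LL (W-{z}) Or) \<le> F (W-{z})"
        by (rule less.hyps[OF c]) (use less.prems in auto)
    qed
    also have "\<dots> \<le> F W"
      using lemmaK[OF less.prems, of "mn Or W"] mnO_indep[OF cov] by (auto simp: mn_def)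
    finally show ?thesis .
  qed
qed

lemma main_strict:
  assumes fin: "finite W" and ne: "W \<noteq> {}" and WAB: "W \<subseteq> A \<union> B"
    and cov: "\<forall>x y. {x,y}\<in>E \<longrightarrow> (x,y)\<in>Or \<or> (y,x)\<in>Or" and nt: "\<not> tight W (mn Or W)"
  shows "card (LL W Or) < F W"
proof -
  have "card (LL W Or) = (\<Sum>z\<in>mn Or W. card (LL (W-{z}) Or))" by (rule LL_rec[OF fin ne])
  also have "\<dots> \<le> (\<Sum>z\<in>mn Or W. F (W-{z}))"
  proof (rule sum_mono)
    fix z assume "z \<in> mn Or W"
    then have "z \<in> W" unfolding mn_def by auto
    then show "card (LL (W-{z}) Or) \<le> F (W-{z})"
      using main_le[OF _ _ cov, of "W-{z}"] fin WAB by auto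
  qed
  also have "\<dots> < F W"
    using lemmaK[OF fin WAB, of "mn Or W"] mnO_indep[OF cov] nt by (auto simp: mn_def)
  finally show ?thesis .
qed

lemma tight_bip:
  assumes arcs: "\<forall>(u,v)\<in>Or. {u,v}\<in>E" and cov: "\<forall>x y. {x,y}\<in>E \<longrightarrow> (x,y)\<in>Or \<or> (y,x)\<in>Or"
    and EV: "\<forall>e\<in>E. e \<subseteq> V" and conn: "\<forall>u\<in>V. \<forall>v\<in>V. (u,v) \<in> (adj E)\<^sup>*"
    and t: "tight V (mn Or V)"
  shows "Or = Up \<or> Or = O_down E A B"
proof (cases "E = {}")
  case True
  then have "Or = {}" using arcs by auto
  moreover have "Up = {}" using True unfolding O_up_def by auto
  ultimately show ?thesis by simp
next
  case False
  then obtain e0 where e0E: "e0 \<in> E" by auto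
  then have "\<exists>a\<in>A. \<exists>b\<in>B. e0 = {a,b}" using edg by auto
  then obtain x0 y0 where "e0 = {x0,y0}" by auto
  with e0E have e0: "{x0,y0} \<in> E" by simp
  then have x0V: "x0 \<in> V" using EV by auto
  define S where "S = mn Or V"
  define P where "P v = (v \<in> S \<longleftrightarrow> v \<in> B)" for v
  have ind: "indep S" unfolding S_def by (rule mnO_indep[OF cov])
  have ep: "{x,y}\<in>E \<Longrightarrow> (P x \<longleftrightarrow> P y)" for x y
  proof -
    assume e: "{x,y}\<in>E"
    then have "x \<in> V" "y \<in> V" using EV by auto
    then have "x \<in> S \<or> y \<in> S" using t e unfolding tight_def S_def by blast
    moreover have "\<not> (x \<in> S \<and> y \<in> S)" using ind e unfolding indep_def by blast
    moreover have "(x \<in> B) \<noteq> (y \<in> B)" using edge_cases[OF e] by blast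
    ultimately show ?thesis unfolding P_def by blast
  qed
  have allP: "v \<in> V \<Longrightarrow> (P x0 \<longleftrightarrow> P v)" for v
  proof -
    assume "v \<in> V"
    then have "(x0, v) \<in> (adj E)\<^sup>*" using conn x0V by auto
    then show ?thesis
    proof (induction rule: rtrancl_induct)
      case base then show ?case by simp
    next
      case (step y z)
      then have "{y,z} \<in> E" unfolding adj_def by auto
      then show ?case using ep step.IH by blast
    qed
  qed
  have OV: "(u,v) \<in> Or \<Longrightarrow> u \<in> V \<and> v \<in> V \<and> v \<notin> S \<and> {u,v} \<in> E" for u v
  proof -
    assume uv: "(u,v) \<in> Or"
    then have e: "{u,v} \<in> E" using arcs by auto
    then have "u \<in> V" "v \<in> V" using EV by auto
    moreover have "v \<notin> S" using uv \<open>u \<in> V\<close> unfolding S_def mn_def by auto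
    ultimately show ?thesis using e by simp
  qed
  have Sm: "u \<in> S \<Longrightarrow> (v,u) \<notin> Or" for u v
    unfolding S_def mn_def using OV by auto
  show ?thesis
  proof (cases "P x0")
    case True
    then have PV: "v \<in> V \<Longrightarrow> (v \<in> S \<longleftrightarrow> v \<in> B)" for v using allP unfolding P_def by blast
    have "Or = Up"
    proof (intro set_eqI iffI)
      fix p assume "p \<in> Or"
      then obtain u v where p: "p = (u,v)" "(u,v) \<in> Or" by (cases p) auto
      then have "v \<notin> B" "{u,v}\<in>E" using OV PV by blast+
      then show "p \<in> Up" using p edge_cases by (auto simp: Up_iff)
    next
      fix p assume "p \<in> Up"
      then obtain u v where p: "p = (u,v)" "{u,v}\<in>E" "u\<in>B" "v\<in>A" by (cases p) (auto simp: Up_iff)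
      then have "u \<in> S" using PV EV by blast
      then show "p \<in> Or" using Sm cov p by blast
    qed
    then show ?thesis by simp
  next
    case False
    then have PV: "v \<in> V \<Longrightarrow> (v \<in> S \<longleftrightarrow> v \<notin> B)" for v using allP unfolding P_def by blast
    have Dn: "(u,v) \<in> O_down E A B \<longleftrightarrow> {u,v}\<in>E \<and> u\<in>A \<and> v\<in>B" for u v
      unfolding O_down_def by auto
    have "Or = O_down E A B"
    proof (intro set_eqI iffI)
      fix p assume "p \<in> Or"
      then obtain u v where p: "p = (u,v)" "(u,v) \<in> Or" by (cases p) auto
      then have "v \<in> B" "{u,v}\<in>E" using OV PV by blast+
      then show "p \<in> O_down E A B" using p edge_cases by (auto simp: Dn)
    next
      fix p assume "p \<in> O_down E A B"
      then obtain u v where p: "p = (u,v)" "{u,v}\<in>E" "u\<in>A" "v\<in>B" by (cases p) (auto simp: Dn)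
      then have "u \<notin> B" using disj by auto
      then have "u \<in> S" using PV EV p by blast
      then show "p \<in> Or" using Sm cov p by blast
    qed
    then show ?thesis by simp
  qed
qed

end


theorem theorem2p6:
  fixes V :: "'a set" and E :: "'a set set" and V1 V2 :: "'a set" and Or :: "('a \<times> 'a) set"
  assumes "simple_graph V E"
    and "connected_graph V E"
    and "bipartition V E V1 V2"
    and "orientation E Or"
    and "acyclic Or"
  shows "(\<exists>f. inj_on f (lin_ext_orient V Or) \<and>
              f ` lin_ext_orient V Or \<subseteq> lin_ext_orient V (O_up E V1 V2))
       \<and> (\<forall>f. inj_on f (lin_ext_orient V Or) \<and>
              f ` lin_ext_orient V Or \<subseteq> lin_ext_orient V (O_up E V1 V2) \<longrightarrow>
              (f ` lin_ext_orient V Or = lin_ext_orient V (O_up E V1 V2) \<longleftrightarrow>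
               Or = O_up E V1 V2 \<or> Or = O_down E V1 V2))
       \<and> num_lin_ext V Or \<le> num_lin_ext V (O_up E V1 V2)
       \<and> (num_lin_ext V Or = num_lin_ext V (O_up E V1 V2) \<longleftrightarrow>
               Or = O_up E V1 V2 \<or> Or = O_down E V1 V2)"
proof -
  have fin: "finite V" and EV: "\<forall>e\<in>E. e \<subseteq> V" and c2: "\<forall>e\<in>E. card e = 2"
    using assms(1) unfolding simple_graph_def by auto
  have conn: "\<forall>u\<in>V. \<forall>v\<in>V. (u,v) \<in> (adj E)\<^sup>*" using assms(2) unfolding connected_graph_def by auto
  have dj: "V1 \<inter> V2 = {}" and un: "V1 \<union> V2 = V" and ed: "\<forall>e\<in>E. \<exists>u\<in>V1. \<exists>v\<in>V2. e = {u, v}"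
    using assms(3) unfolding bipartition_def by auto
  interpret bip E V1 V2 by unfold_locales (use dj ed in auto)
  have arcs: "\<forall>(u,v)\<in>Or. {u,v}\<in>E" using assms(4) unfolding orientation_def by auto
  have cov: "\<forall>x y. {x,y}\<in>E \<longrightarrow> (x,y)\<in>Or \<or> (y,x)\<in>Or"
  proof (intro allI impI)
    fix x y assume xy: "{x,y} \<in> E"
    have o2: "\<forall>e\<in>E. \<exists>!p. p\<in>Or \<and> {fst p, snd p} = e" using assms(4) unfolding orientation_def by simp
    have "\<exists>!p. p\<in>Or \<and> {fst p, snd p} = {x,y}" using bspec[OF o2 xy] .
    then obtain p where "p \<in> Or" "{fst p, snd p} = {x,y}" by auto
    then show "(x,y)\<in>Or \<or> (y,x)\<in>Or" by (cases p) (auto simp: doubleton_eq_iff)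
  qed
  have OrV: "Or \<subseteq> V \<times> V"
  proof
    fix p assume p: "p \<in> Or"
    obtain a b where ab: "p = (a,b)" by (cases p)
    then have "{a,b} \<in> E" using arcs p by auto
    then have "{a,b} \<subseteq> V" using EV by blast
    then show "p \<in> V \<times> V" using ab by auto
  qed
  have UpV: "Up \<subseteq> V \<times> V" using EV unfolding O_up_def by auto
  have Dconv: "O_down E V1 V2 = Up\<inverse>" unfolding O_down_def O_up_def by auto
  have DnV: "O_down E V1 V2 \<subseteq> V \<times> V" using UpV Dconv by auto
  have eO: "num_lin_ext V Or = card (LL V Or)"
    unfolding num_lin_ext_def lin_ext_orient_def induced_order_def by (rule bridge[OF fin OrV])
  have eU: "num_lin_ext V Up = F V"
    unfolding num_lin_ext_def lin_ext_orient_def induced_order_def F_def by (rule bridge[OF fin UpV])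
  have eD: "num_lin_ext V (O_down E V1 V2) = F V"
    unfolding num_lin_ext_def lin_ext_orient_def induced_order_def F_def
    using bridge[OF fin DnV] card_LL_conv_eq[OF fin, of Up] Dconv by simp
  have VAB: "V \<subseteq> V1 \<union> V2" using un by simp
  have le: "num_lin_ext V Or \<le> num_lin_ext V Up"
    using main_le[OF fin VAB cov] eO eU by simp
  have iff: "num_lin_ext V Or = num_lin_ext V Up \<longleftrightarrow> Or = Up \<or> Or = O_down E V1 V2"
  proof
    assume "Or = Up \<or> Or = O_down E V1 V2"
    then show "num_lin_ext V Or = num_lin_ext V Up" using eU eD by auto
  next
    assume eq: "num_lin_ext V Or = num_lin_ext V Up"
    show "Or = Up \<or> Or = O_down E V1 V2"
    proof (rule ccontr)
      assume nb: "\<not> (Or = Up \<or> Or = O_down E V1 V2)"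
      show False
      proof (cases "V = {}")
        case True
        then have "E = {}" using EV c2 by fastforce
        then have "Or = {}" "Up = {}" using arcs unfolding O_up_def by auto
        then show False using nb by simp
      next
        case False
        show False
        proof (cases "tight V (mn Or V)")
          case True
          then show False using tight_bip[OF arcs cov EV conn] nb by blast
        next
          case nt: False
          have "card (LL V Or) < F V" by (rule main_strict[OF fin False VAB cov nt])
          then show False using eq eO eU by simp
        qed
      qed
    qed
  qed
  let ?LO = "lin_ext_orient V Or" and ?LU = "lin_ext_orient V Up"
  have fLO: "finite ?LO" and fLU: "finite ?LU" unfolding lin_ext_orient_def by (auto intro: finite_LE fin)
  have cLO: "card ?LO = num_lin_ext V Or" and cLU: "card ?LU = num_lin_ext V Up"
    unfolding num_lin_ext_def by simp_all
  have p1: "\<exists>f. inj_on f ?LO \<and> f ` ?LO \<subseteq> ?LU"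
    using card_le_inj[OF fLO fLU] le cLO cLU by auto
  have p2: "\<forall>f. inj_on f ?LO \<and> f ` ?LO \<subseteq> ?LU \<longrightarrow> (f ` ?LO = ?LU \<longleftrightarrow> Or = Up \<or> Or = O_down E V1 V2)"
  proof (intro allI impI)
    fix f assume f: "inj_on f ?LO \<and> f ` ?LO \<subseteq> ?LU"
    have ci: "card (f ` ?LO) = card ?LO" using f by (simp add: card_image)
    have "f ` ?LO = ?LU \<longleftrightarrow> card ?LO = card ?LU"
    proof
      assume "f ` ?LO = ?LU" then show "card ?LO = card ?LU" using ci by simp
    next
      assume "card ?LO = card ?LU"
      then show "f ` ?LO = ?LU" using card_subset_eq[OF fLU] f ci by auto
    qed
    then show "f ` ?LO = ?LU \<longleftrightarrow> Or = Up \<or> Or = O_down E V1 V2" using iff cLO cLU by simp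
  qed
  show ?thesis using p1 p2 le iff by blast
qed


end
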